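(* For all integers $n,p,m\ge0$, $$\sum_{k=0}^n\binom{k+p}{k}H_{n-k}(m)\,(H_{k+p}-H_p)=\sum_{k=0}^n\binom{k+p}{k}H_{n-k}(m+1).$$ In particular, $\sum_{k=0}^n\binom{k+p}{k}(H_{k+p}-H_p)=\sum_{k=0}^n\binom{k+p}{k}H_{n-k}$ and $\sum_{k=0}^n\binom{k+p}{k}H_{n-k}(H_{k+p}-H_p)=\sum_{k=0}^n\binom{k+p}{k}\left(H_{n-k}^2-H_{n-k}^{(2)}\right)$.
   Context: For integers $m\ge 1$, $n\ge 0$, the multiple harmonic-like numbers are $H_n(m)=\sum_{1\le k_1+k_2+\cdots+k_m\le n}\frac{1}{k_1k_2\cdots k_m}$ (sum over positive integers $k_1,\dots,k_m$), with $H_n(0)=1$ for $n\ge 0$ and $H_0(m)=0$ for $m\ge1$. Equivalently, $\sum_{n\ge0}H_n(m)z^n=\frac{(-\ln(1-z))^m}{1-z}$. $H_n=\sum_{k=1}^n\frac1k$, $H_n^{(2)}=\sum_{k=1}^n\frac1{k^2}$. *)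

theory Defs
  imports "HOL-Analysis.Analysis"
begin

text \<open>For m = 0 the only tuple is the empty one, giving H_n(0) = 1;
  for n = 0, m \<ge> 1 there are no tuples, giving H_0(m) = 0.\<close>
definition mharm :: "nat \<Rightarrow> nat \<Rightarrow> real" where
  "mharm n m = (\<Sum>ks \<in> {ks :: nat list. length ks = m \<and> (\<forall>k\<in>set ks. 1 \<le> k) \<and> sum_list ks \<le> n}.
                  1 / real (prod_list ks))"

definition harm2 :: "nat \<Rightarrow> real" where
  "harm2 n = (\<Sum>k=1..n. 1 / (real k)^2)"

end

theory Submission imports Defs begin

definition S :: "nat \<Rightarrow> nat \<Rightarrow> nat list set" where
 "S N m = {ks :: nat list. length ks = m \<and> (\<forall>k\<in>set ks. 1 \<le> k) \<and> sum_list ks \<le> N}"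

definition ell :: "nat \<Rightarrow> real" where "ell j = (if j = 0 then 0 else 1 / real j)"

lemma finite_S: "finite (S N m)"
proof -
  have "S N m \<subseteq> {ks. set ks \<subseteq> {0..N} \<and> length ks = m}"
    unfolding S_def using elem_le_sum_list by (fastforce simp: in_set_conv_nth)
  moreover have "finite {ks. set ks \<subseteq> {0..N} \<and> length ks = m}"
    by (rule finite_lists_length_eq) simp
  ultimately show ?thesis by (rule finite_subset)
qed

lemma mharm_S: "mharm N m = (\<Sum>ks\<in>S N m. 1 / real (prod_list ks))"
  unfolding mharm_def S_def by simp

lemma S_Suc: "S N (Suc m) = (\<lambda>(j,ks). j#ks) ` (SIGMA j:{1..N}. S (N-j) m)"
proof (intro set_eqI iffI)
  fix xs assume "xs \<in> S N (Suc m)"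
  then obtain j ks where xs: "xs = j # ks" and "length ks = m" "1 \<le> j" "\<forall>k\<in>set ks. 1 \<le> k" "j + sum_list ks \<le> N"
    unfolding S_def by (cases xs) auto
  then show "xs \<in> (\<lambda>(j,ks). j#ks) ` (SIGMA j:{1..N}. S (N-j) m)"
    unfolding S_def by (auto intro!: image_eqI[of _ _ "(j,ks)"])
next
  fix xs assume "xs \<in> (\<lambda>(j,ks). j#ks) ` (SIGMA j:{1..N}. S (N-j) m)"
  then show "xs \<in> S N (Suc m)" unfolding S_def by auto
qed

lemma mharm_Suc: "mharm N (Suc m) = (\<Sum>j\<le>N. ell j * mharm (N-j) m)"
proof -
  have inj: "inj_on (\<lambda>(j,ks). j#ks) (SIGMA j:{1..N}. S (N-j) m)"
    by (auto simp: inj_on_def)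
  have "mharm N (Suc m) = (\<Sum>(j,ks)\<in>(SIGMA j:{1..N}. S (N-j) m). 1 / real (prod_list (j#ks)))"
    unfolding mharm_S S_Suc by (subst sum.reindex[OF inj]) (simp add: case_prod_unfold)
  also have "\<dots> = (\<Sum>j\<in>{1..N}. \<Sum>ks\<in>S (N-j) m. ell j * (1 / real (prod_list ks)))"
    by (subst sum.Sigma[symmetric]) (auto simp: finite_S ell_def)
  also have "\<dots> = (\<Sum>j\<in>{1..N}. ell j * mharm (N-j) m)"
    by (simp add: mharm_S sum_distrib_left)
  also have "\<dots> = (\<Sum>j\<le>N. ell j * mharm (N-j) m)"
    by (rule sum.mono_neutral_left) (auto simp: ell_def)
  finally show ?thesis .
qed

lemma mharm_0: "mharm N 0 = 1"
proof -
  have "S N 0 = {[]}" unfolding S_def by auto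
  thus ?thesis by (simp add: mharm_S)
qed

lemma harm_ell: "harm N = (\<Sum>j\<le>N. ell j)"
  unfolding harm_def
  by (rule sum.mono_neutral_cong_left) (auto simp: ell_def field_simps)

lemma mharm_1: "mharm N 1 = harm N"
  using mharm_Suc[of N 0] by (simp add: mharm_0 harm_ell)


lemma refl_sum: "(\<Sum>j\<le>k. f j (k-j)) = (\<Sum>a\<le>k. f (k-a) (a::nat) :: real)"
  by (rule sum.reindex_bij_witness[where i="\<lambda>i. k - i" and j="\<lambda>i. k - i"]) auto

lemma tri2: "(\<Sum>a\<le>(n::nat). \<Sum>c\<le>n-a. G a c) = (\<Sum>k\<le>n. \<Sum>a\<le>k. G a (k-a) :: real)"
proof -
  have "{(i,j). i+j \<le> n} = (SIGMA a:{..n}. {..n-a})" by auto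
  hence "(\<Sum>a\<le>n. \<Sum>c\<le>n-a. G a c) = (\<Sum>(i,j)\<in>{(i,j). i+j \<le> n}. G i j)"
    by (simp add: sum.Sigma)
  also have "\<dots> = (\<Sum>k\<le>n. \<Sum>a\<le>k. G a (k-a))" by (rule sum.triangle_reindex_eq)
  finally show ?thesis .
qed

definition bb :: "nat \<Rightarrow> nat \<Rightarrow> real" where "bb p k = real ((k+p) choose k)"
definition ff :: "nat \<Rightarrow> nat \<Rightarrow> real" where "ff p k = bb p k * (harm (k+p) - harm p)"
definition gg :: "nat \<Rightarrow> nat \<Rightarrow> real" where "gg p k = (\<Sum>j\<le>k. ell j * bb p (k-j))"

lemma bb_sum: "bb (Suc p) k = (\<Sum>i\<le>k. bb p i)"
  using sum_choose_lower[of p k] unfolding bb_def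
  by (metis (no_types, lifting) add.commute add_Suc_right of_nat_sum sum.cong)

lemma gg_Suc: "gg (Suc p) k = (\<Sum>i\<le>k. gg p i)"
  unfolding gg_def bb_sum sum_distrib_left
  by (rule tri2)

lemma binom1: "(p+1) * ((k+p+2) choose (k+1)) = (k+p+2) * ((k+p+1) choose (k+1))"
  using binomial_absorb_comp[of "k+p+2" "k+1"] by simp

lemma binom2: "(p+1) * ((k+p+1) choose k) = (k+1) * ((k+p+1) choose (k+1))"
proof -
  have a: "(k+1) * ((k+p+1) choose (k+1)) = (k+p+1) * ((k+p) choose k)"
    using binomial_absorption[of k "k+p+1"] by simp
  have b: "(p+1) * ((k+p+1) choose (p+1)) = (k+p+1) * ((k+p) choose p)"
    using binomial_absorption[of p "k+p+1"] by simp
  have c: "((k+p+1) choose k) = ((k+p+1) choose (p+1))"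
    using binomial_symmetric[of k "k+p+1"] by simp
  have d: "((k+p) choose p) = ((k+p) choose k)"
    using binomial_symmetric[of k "k+p"] by simp
  show ?thesis using a b c d by simp
qed

lemma alg: "(y::real) > 0 \<Longrightarrow> x \<ge> 0 \<Longrightarrow> z = x + y \<Longrightarrow> (c::real)*z/y * (H + 1/z - (hh + 1/y)) = c*x/y*(H - (hh+1/y)) + c*(H - hh)"
proof -
  assume a: "y > 0" "x \<ge> 0" "z = x + y"
  hence "z > 0" by simp
  have 1: "c*z/y*(H + 1/z - (hh+1/y)) = c*z/y*(H - hh) + c/y - c*z/y/y"
    using \<open>z > 0\<close> \<open>y > 0\<close> by (simp add: field_simps)
  have 2: "c*z/y*(H-hh) = c*x/y*(H-hh) + c*(H-hh)" using a by (simp add: field_simps)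
  have 3: "c/y - c*z/y/y = - (c*x/y/y)" using a by (simp add: field_simps)
  have 4: "c*x/y*(H - (hh+1/y)) = c*x/y*(H-hh) - c*x/y/y" using a by (simp add: field_simps)
  show ?thesis unfolding 1 4 using 2 3 by linarith
qed

lemma ff_step: "ff (Suc p) (Suc k) = ff (Suc p) k + ff p (Suc k)"
proof -
  define c where "c = real ((k+p+1) choose (k+1))"
  have r1: "real (p+1) * real ((k+p+2) choose (k+1)) = real (k+p+2) * c"
    using arg_cong[OF binom1[of p k], of real] unfolding c_def of_nat_mult .
  have r2: "real (p+1) * real ((k+p+1) choose k) = real (k+1) * c"
    using arg_cong[OF binom2[of p k], of real] unfolding c_def of_nat_mult .
  have e1: "bb (Suc p) (Suc k) = c * (k+p+2) / (p+1)"
  proof -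
    have "bb (Suc p) (Suc k) = real ((k+p+2) choose (k+1))" unfolding bb_def
      by (simp add: add.commute add.left_commute)
    also have "\<dots> = real (k+p+2) * c / real (p+1)" using r1
      by (simp add: field_simps del: of_nat_add)
    finally show ?thesis by (simp add: field_simps)
  qed
  have e2: "bb (Suc p) k = c * (k+1) / (p+1)"
  proof -
    have "bb (Suc p) k = real ((k+p+1) choose k)" unfolding bb_def
      by (simp add: add.commute add.left_commute)
    also have "\<dots> = real (k+1) * c / real (p+1)" using r2
      by (simp add: field_simps del: of_nat_add)
    finally show ?thesis by (simp add: field_simps)
  qed
  have e3: "bb p (Suc k) = c" unfolding bb_def c_def by (simp add: add.commute)
  have h1: "harm (Suc k + Suc p) = harm (k+p+1) + 1/(k+p+2)"
    by (simp add: harm_Suc field_simps)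
  have h2: "harm (k + Suc p) = (harm (k+p+1) :: real)" by simp
  have h3: "harm (Suc p) = harm p + 1/(p+1::real)" by (simp add: harm_Suc field_simps)
  have h4: "harm (Suc k + p) = (harm (k+p+1) :: real)" by simp
  show ?thesis unfolding ff_def e1 e2 e3 h1 h2 h3 h4
    by (rule alg) auto
qed

lemma ff_Suc: "ff (Suc p) k = (\<Sum>i\<le>k. ff p i)"
proof (induction k)
  case 0 thus ?case by (simp add: ff_def)
next
  case (Suc k) thus ?case using ff_step by simp
qed

lemma ff_gg: "ff p k = gg p k"
proof (induction p arbitrary: k)
  case 0
  have "ff 0 k = harm k" by (simp add: ff_def bb_def harm_def)
  also have "\<dots> = gg 0 k" by (simp add: gg_def bb_def harm_ell)
  finally show ?case .
next
  case (Suc p) thus ?case by (simp add: ff_Suc gg_Suc)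
qed


definition QQ :: "nat \<Rightarrow> real" where "QQ M = (\<Sum>j\<le>M. ell j * ell (M-j))"

lemma ell_mult: "ell j * real j = (if j = 0 then 0 else 1)"
  by (simp add: ell_def)

lemma half_sum: "(\<Sum>a\<le>Suc N. (if Suc N - a = 0 then 0 else 1) * ell a) = harm N"
proof -
  have "(\<Sum>a\<le>Suc N. (if Suc N - a = 0 then 0 else 1) * ell a) = (\<Sum>a\<le>N. (if Suc N - a = 0 then 0 else 1) * ell a)"
    by simp
  also have "\<dots> = (\<Sum>a\<le>N. ell a)" by (rule sum.cong) auto
  finally show ?thesis by (simp add: harm_ell)
qed

lemma QQ_Suc: "real (Suc N) * QQ (Suc N) = 2 * harm N"
proof -
  define M where "M = Suc N"
  have "real M * QQ M = (\<Sum>j\<le>M. (ell j * real j) * ell (M-j) + ell j * (ell (M-j) * real (M-j)))"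
    unfolding QQ_def sum_distrib_left
  proof (rule sum.cong)
    fix j assume "j \<in> {..M}"
    hence "real M = real j + real (M-j)" by (simp add: of_nat_diff)
    hence e: "real M = real j + real (M-j)" .
    show "real M * (ell j * ell (M - j)) = ell j * real j * ell (M - j) + ell j * (ell (M - j) * real (M - j))"
      by (simp only: e) (simp add: algebra_simps)
  qed simp
  also have "\<dots> = (\<Sum>j\<le>M. (if j = 0 then 0 else 1) * ell (M-j)) + (\<Sum>j\<le>M. ell j * (if M - j = 0 then 0 else 1))"
    by (simp only: ell_mult sum.distrib)
  also have "(\<Sum>j\<le>M. (if j = 0 then 0 else 1) * ell (M-j)) = (\<Sum>a\<le>M. (if M - a = 0 then 0 else 1) * ell a)"
    by (rule refl_sum[where f="\<lambda>j i. (if j = 0 then 0 else 1) * ell i"])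
  also have "(\<Sum>j\<le>M. ell j * (if M - j = 0 then 0 else 1)) = (\<Sum>a\<le>M. (if M - a = 0 then 0 else 1) * ell a)"
    by (simp add: mult.commute)
  finally show ?thesis unfolding M_def half_sum by simp
qed

lemma TT: "(\<Sum>j\<le>M. ell j * harm (M-j)) = (\<Sum>k\<le>M. QQ k)"
  unfolding harm_ell sum_distrib_left QQ_def by (rule tri2)

lemma TT2: "(\<Sum>j\<le>M. ell j * harm (M-j)) = harm M ^ 2 - harm2 M"
proof (induction M)
  case 0 thus ?case by (simp add: TT QQ_def ell_def harm2_def harm_def)
next
  case (Suc N)
  have q: "QQ (Suc N) = 2 * harm N / real (Suc N)"
    using QQ_Suc[of N] by (simp add: field_simps)
  have "(\<Sum>j\<le>Suc N. ell j * harm (Suc N-j)) = (\<Sum>j\<le>N. ell j * harm (N-j)) + QQ (Suc N)"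
    by (simp add: TT)
  also have "\<dots> = harm N ^ 2 - harm2 N + 2 * harm N / real (Suc N)" using Suc q by simp
  also have "\<dots> = harm (Suc N) ^ 2 - harm2 (Suc N)"
  proof -
    define x where "x = real (Suc N)"
    have x: "x > 0" unfolding x_def by simp
    have a: "harm (Suc N) = harm N + 1/x" unfolding x_def by (simp add: harm_Suc divide_inverse)
    have b: "harm2 (Suc N) = harm2 N + 1/x^2" unfolding x_def harm2_def by simp
    show ?thesis unfolding a b x_def[symmetric] using x
      by (simp add: power2_eq_square field_simps)
  qed
  finally show ?case .
qed

lemma mharm_2: "mharm N 2 = harm N ^ 2 - harm2 N"
proof -
  have "mharm N 2 = mharm N (Suc 1)" by (simp add: numeral_2_eq_2)
  also have "\<dots> = (\<Sum>j\<le>N. ell j * harm (N-j))" unfolding mharm_Suc mharm_1 ..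
  finally show ?thesis by (simp add: TT2)
qed

lemma part1:
  "(\<Sum>k=0..n. real ((k+p) choose k) * mharm (n-k) m * (harm (k+p) - harm p))
           = (\<Sum>k=0..n. real ((k+p) choose k) * mharm (n-k) (m+1))"
proof -
  have "(\<Sum>k=0..n. real ((k+p) choose k) * mharm (n-k) m * (harm (k+p) - harm p))
      = (\<Sum>k\<le>n. \<Sum>a\<le>k. bb p a * ell (k-a) * mharm (n-a-(k-a)) m)"
    unfolding atLeast0AtMost
  proof (rule sum.cong)
    fix k assume k: "k \<in> {..n}"
    have "real ((k+p) choose k) * mharm (n-k) m * (harm (k+p) - harm p) = mharm (n-k) m * gg p k"
      using ff_gg[of p k] by (simp add: ff_def bb_def)
    also have "\<dots> = (\<Sum>j\<le>k. mharm (n-k) m * (ell j * bb p (k-j)))"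
      by (simp add: gg_def sum_distrib_left)
    also have "\<dots> = (\<Sum>a\<le>k. mharm (n-k) m * (ell (k-a) * bb p a))"
      by (rule refl_sum[where f="\<lambda>j i. mharm (n-k) m * (ell j * bb p i)"])
    also have "\<dots> = (\<Sum>a\<le>k. bb p a * ell (k-a) * mharm (n-a-(k-a)) m)"
      by (rule sum.cong) (auto simp: algebra_simps)
    finally show "real ((k+p) choose k) * mharm (n-k) m * (harm (k+p) - harm p) = \<dots>" .
  qed simp
  also have "\<dots> = (\<Sum>a\<le>n. \<Sum>c\<le>n-a. bb p a * ell c * mharm (n-a-c) m)"
    by (rule tri2[symmetric])
  also have "\<dots> = (\<Sum>a\<le>n. bb p a * mharm (n-a) (m+1))"
    by (simp add: mharm_Suc sum_distrib_left mult.assoc)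
  finally show ?thesis by (simp add: atLeast0AtMost bb_def)
qed

theorem theorem10:
  fixes n p m :: nat
  shows "((\<Sum>k=0..n. real ((k+p) choose k) * mharm (n-k) m * (harm (k+p) - harm p))
           = (\<Sum>k=0..n. real ((k+p) choose k) * mharm (n-k) (m+1)))
      \<and> ((\<Sum>k=0..n. real ((k+p) choose k) * (harm (k+p) - harm p))
           = (\<Sum>k=0..n. real ((k+p) choose k) * harm (n-k)))
      \<and> ((\<Sum>k=0..n. real ((k+p) choose k) * harm (n-k) * (harm (k+p) - harm p))
           = (\<Sum>k=0..n. real ((k+p) choose k) * ((harm (n-k))^2 - harm2 (n-k))))"
proof -
  have a: "mharm N (0+1) = harm N" for N using mharm_1 by simp
  have b: "mharm N (1+1) = harm N ^ 2 - harm2 N" for N using mharm_2 by (simp add: numeral_2_eq_2)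
  show ?thesis
    using part1[where n=n and p=p and m=m] part1[where n=n and p=p and m=0] part1[where n=n and p=p and m=1]
    unfolding a b mharm_0 mharm_1 by simp
qed

end
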